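(* Let $s\in\mathbb{R}$, $s_0>1/2$ and $0<\lambda\le1$. Then for all $u_0\in H^{s_0}(\mathbb{R})$, $v_0\in H^{s-3}(\mathbb{R})$, $$\|B(u_0,v_0)\|_{H^s}\lesssim\|u_0\|_{H^{s_0}}\|v_0\|_{H^{s-3}},$$ with implicit constant independent of $\lambda$.
   Context: Fourier transform $\hat f(\xi)=(2\pi)^{-1/2}\int f(x)e^{-ix\xi}dx$. $\varphi$ even smooth, $=1$ on $[-1,1]$, $=0$ outside $[-5/4,5/4]$; $\varphi_N=\varphi(\cdot/N)$, $\psi_N=\varphi_N-\varphi_{N/2}$. Fix a sufficiently large dyadic constant $C_0$. With $\xi_2=\xi-\xi_1$, $$M_\lambda(\xi,\xi_1)=\frac{1}{(2\pi)^{1/2}}\sum_{N\ \text{dyadic},\ N\ge C_0}\frac{\varphi_{N/8}(\xi_1)\psi_N(\xi)}{\lambda\xi^2-\lambda\xi_1^2-\xi_2^3},$$ $T_{M_\lambda}(f,g)=\mathscr{F}^{-1}_\xi\big(\int M_\lambda(\xi,\xi_1)\hat f(\xi_1)\hat g(\xi-\xi_1)\,d\xi_1\big)$, and $B(u_0,v_0)=-iT_{M_\lambda}(u_0,v_0)$. *)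

theory Defs
  imports "HOL-Analysis.Analysis"
begin

definition smooth_fun :: "(real \<Rightarrow> real) \<Rightarrow> bool" where
  "smooth_fun f \<longleftrightarrow> (\<forall>n. \<forall>x. ((deriv ^^ n) f) differentiable (at x))"

definition phiN :: "(real \<Rightarrow> real) \<Rightarrow> real \<Rightarrow> real \<Rightarrow> real" where
  "phiN \<phi> N x = \<phi> (x / N)"

definition psiN :: "(real \<Rightarrow> real) \<Rightarrow> real \<Rightarrow> real \<Rightarrow> real" where
  "psiN \<phi> N x = phiN \<phi> N x - phiN \<phi> (N / 2) x"

text \<open>The multiplier M_lambda(xi, xi1); the dyadic N >= C0 (C0 dyadic) are N = C0 * 2^k, k in nat.\<close>
definition M_lambda :: "(real \<Rightarrow> real) \<Rightarrow> real \<Rightarrow> real \<Rightarrow> real \<Rightarrow> real \<Rightarrow> real" where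
  "M_lambda \<phi> C0 lam \<xi> \<xi>1 =
     (1 / sqrt (2 * pi)) *
     (\<Sum>k::nat. (let N = C0 * 2 ^ k in
        phiN \<phi> (N / 8) \<xi>1 * psiN \<phi> N \<xi> /
        (lam * \<xi>^2 - lam * \<xi>1^2 - (\<xi> - \<xi>1)^3)))"

text \<open>Fourier transform of B(u0,v0) = -i T_M(u0,v0), written in terms of
  a = Fourier transform of u0 and b = Fourier transform of v0.\<close>
definition B_hat :: "(real \<Rightarrow> real) \<Rightarrow> real \<Rightarrow> real \<Rightarrow> (real \<Rightarrow> complex) \<Rightarrow> (real \<Rightarrow> complex)
                      \<Rightarrow> real \<Rightarrow> complex" where
  "B_hat \<phi> C0 lam a b \<xi> =
     - \<i> * (\<integral>\<xi>1. complex_of_real (M_lambda \<phi> C0 lam \<xi> \<xi>1) * a \<xi>1 * b (\<xi> - \<xi>1) \<partial>lborel)"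

text \<open>Squared H^s norm of a function given by its Fourier transform F:
  integral of (1+xi^2)^s |F xi|^2.\<close>
definition Hs_norm_sq :: "real \<Rightarrow> (real \<Rightarrow> complex) \<Rightarrow> ennreal" where
  "Hs_norm_sq s F = (\<integral>\<^sup>+ \<xi>. ennreal ((1 + \<xi>^2) powr s * (cmod (F \<xi>))^2) \<partial>lborel)"

end

theory Submission
  imports Defs
begin

lemma powr_int_fin:
  fixes s0 :: real assumes "s0 > 1/2"
  shows "(\<integral>\<^sup>+y. ennreal ((1 + y^2) powr (-s0)) \<partial>lborel) < \<infinity>"
proof -
  define ee :: real where "ee = -2 * s0"
  have eeneg: "ee < -1" using assms by (simp add: ee_def)
  define h where "h = (\<lambda>y::real. indicator {1..} y * y powr ee)"
  have hint: "(h has_integral (-(1 powr (ee+1)) / (ee+1))) UNIV"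
  proof -
    have "h = (\<lambda>x. if x \<in> {1..} then x powr ee else 0)"
      unfolding h_def by (auto simp: indicator_def)
    then show ?thesis using has_integral_powr_to_inf[OF eeneg, of 1]
      by (simp only: has_integral_restrict_UNIV)
  qed
  have hm: "h \<in> borel_measurable borel" unfolding h_def by measurable
  have h0: "\<And>y. 0 \<le> h y" unfolding h_def by (simp add: indicator_def)
  have hfin: "(\<integral>\<^sup>+y. ennreal (h y) \<partial>lborel) < \<infinity>"
    using nn_integral_has_integral_lborel[OF hm h0 hint] by simp
  have hfin2: "(\<integral>\<^sup>+y. ennreal (h (-y)) \<partial>lborel) < \<infinity>"
    using hfin nn_integral_real_affine[of "\<lambda>y. ennreal (h y)" "-1" 0] hm by simp
  have ifin: "(\<integral>\<^sup>+y. ennreal (indicator {-1..1} (y::real)) \<partial>lborel) < \<infinity>"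
    by (simp add: ennreal_indicator)
  have pt: "ennreal ((1 + y^2) powr (-s0)) \<le> ennreal (indicator {-1..1} y) + (ennreal (h y) + ennreal (h (-y)))" for y
  proof (cases "\<bar>y\<bar> \<le> 1")
    case True
    have "(1 + y^2) powr (-s0) \<le> 1"
    proof -
      have "1 \<le> (1 + y^2) powr s0" using assms by (intro ge_one_powr_ge_zero) auto
      then show ?thesis by (simp add: powr_minus inverse_le_1_iff)
    qed
    then have "ennreal ((1 + y^2) powr (-s0)) \<le> ennreal (indicator {-1..1} y)"
    proof -
      have "y \<in> {-1..1}" using True by (simp add: abs_le_iff)
      then show ?thesis using \<open>(1 + y^2) powr (-s0) \<le> 1\<close> by simp
    qed
    then show ?thesis by (rule order_trans) (rule add_increasing2; simp)
  next
    case False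
    have "(1 + y^2) powr (-s0) \<le> (y^2) powr (-s0)"
    proof (rule powr_mono2')
      show "- s0 \<le> 0" using assms by simp
      have "y \<noteq> 0" using False by auto
      then show "0 < y^2" by simp
      show "y^2 \<le> 1 + y^2" by simp
    qed
    also have "(y^2) powr (-s0) = \<bar>y\<bar> powr ee"
    proof -
      have "y \<noteq> 0" using False by auto
      then have "y^2 = \<bar>y\<bar> powr 2" by (simp add: powr_realpow)
      then have "(y^2) powr (-s0) = (\<bar>y\<bar> powr 2) powr (-s0)" by (rule arg_cong)
      also have "\<dots> = \<bar>y\<bar> powr (2 * (-s0))" by (rule powr_powr)
      finally show ?thesis by (simp add: ee_def)
    qed
    finally have le: "(1 + y^2) powr (-s0) \<le> \<bar>y\<bar> powr ee" .
    show ?thesis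
    proof (cases "y \<ge> 1")
      case True
      then show ?thesis using le False unfolding h_def
        by (auto simp: indicator_def intro!: add_increasing2 add_increasing)
    next
      case False
      then have "y \<le> -1" using \<open>\<not> \<bar>y\<bar> \<le> 1\<close> by auto
      then show ?thesis using le unfolding h_def
        by (auto simp: indicator_def intro!: add_increasing2 add_increasing)
    qed
  qed
  have "(\<integral>\<^sup>+y. ennreal ((1 + y^2) powr (-s0)) \<partial>lborel) \<le>
     (\<integral>\<^sup>+y. ennreal (indicator {-1..1} y) + (ennreal (h y) + ennreal (h (-y))) \<partial>lborel)"
    by (rule nn_integral_mono) (rule pt)
  also have "\<dots> = (\<integral>\<^sup>+y. ennreal (indicator {-1..1} (y::real)) \<partial>lborel) + ((\<integral>\<^sup>+y. ennreal (h y) \<partial>lborel) + (\<integral>\<^sup>+y. ennreal (h (-y)) \<partial>lborel))"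
  proof -
    note hm[measurable]
    have "(\<integral>\<^sup>+y. ennreal (indicator {-1..1} y) + (ennreal (h y) + ennreal (h (-y))) \<partial>lborel)
      = (\<integral>\<^sup>+y. ennreal (indicator {-1..1} (y::real)) \<partial>lborel) + (\<integral>\<^sup>+y. ennreal (h y) + ennreal (h (-y)) \<partial>lborel)"
      by (subst nn_integral_add) auto
    also have "(\<integral>\<^sup>+y. ennreal (h y) + ennreal (h (-y)) \<partial>lborel) = (\<integral>\<^sup>+y. ennreal (h y) \<partial>lborel) + (\<integral>\<^sup>+y. ennreal (h (-y)) \<partial>lborel)"
      by (subst nn_integral_add) auto
    finally show ?thesis .
  qed
  also have "\<dots> < \<infinity>" using ifin hfin hfin2 by (simp add: ennreal_add_less_top)
  finally show ?thesis .
qed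

lemma ratio_powr:
  fixes r t :: real assumes "1/3 \<le> r" "r \<le> 3"
  shows "r powr t \<le> 3 powr \<bar>t\<bar>"
proof (cases "t \<ge> 0")
  case True
  then have "r powr t \<le> 3 powr t" using assms by (intro powr_mono2) auto
  then show ?thesis using True by simp
next
  case False
  have r0: "r > 0" using assms by simp
  have "r powr t = (1/r) powr (-t)" using r0 by (simp add: powr_minus_divide powr_divide)
  also have "\<dots> \<le> 3 powr (-t)" using False assms r0 by (intro powr_mono2) (auto simp: field_simps)
  finally show ?thesis using False by simp
qed

lemma weight_bound:
  fixes \<xi> y s D :: real
  assumes x8: "8 < \<bar>\<xi>\<bar>" and y: "\<bar>y\<bar> < 5 * \<bar>\<xi>\<bar> / 16"
  shows "(1 + \<xi>^2) powr s * (D / \<bar>\<xi>\<bar>^3)^2 \<le> D^2 * (65/64)^3 * 3 powr \<bar>s - 3\<bar> * (1 + (\<xi> - y)^2) powr (s - 3)"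
proof -
  define \<eta> where "\<eta> = \<xi> - y"
  define X where "X = 1 + \<xi>^2"
  define Y where "Y = 1 + \<eta>^2"
  have X0: "X > 0" and Y0: "Y > 0" unfolding X_def Y_def by (auto intro: add_pos_nonneg)
  have xi2: "\<xi>^2 \<ge> 64"
  proof -
    have "8^2 \<le> \<bar>\<xi>\<bar>^2" using x8 by (intro power_mono) auto
    then show ?thesis by simp
  qed
  have e1: "\<bar>\<eta>\<bar> \<ge> 11 * \<bar>\<xi>\<bar> / 16" unfolding \<eta>_def using y abs_triangle_ineq2[of \<xi> y] abs_triangle_ineq4[of \<xi> y] by linarith
  have e2: "\<bar>\<eta>\<bar> \<le> 21 * \<bar>\<xi>\<bar> / 16" unfolding \<eta>_def using y abs_triangle_ineq2[of \<xi> y] abs_triangle_ineq4[of \<xi> y] by linarith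
  have e1': "\<eta>^2 \<ge> (11 * \<bar>\<xi>\<bar> / 16)^2"
  proof -
    have "(11 * \<bar>\<xi>\<bar> / 16)^2 \<le> \<bar>\<eta>\<bar>^2" using e1 by (intro power_mono) auto
    then show ?thesis by simp
  qed
  have e2': "\<eta>^2 \<le> (21 * \<bar>\<xi>\<bar> / 16)^2"
  proof -
    have "\<bar>\<eta>\<bar>^2 \<le> (21 * \<bar>\<xi>\<bar> / 16)^2" using e2 by (intro power_mono) auto
    then show ?thesis by simp
  qed
  have r1: "X / Y \<le> 3" using e1' Y0 unfolding X_def Y_def by (simp add: field_simps power_mult_distrib)
  have r2: "1/3 \<le> X / Y" using e2' Y0 unfolding X_def Y_def by (simp add: field_simps power_mult_distrib)
  have "(D / \<bar>\<xi>\<bar>^3)^2 = D^2 / (\<xi>^2)^3"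
    by (simp add: power_divide power_mult_distrib flip: power_mult)
  also have "\<dots> \<le> D^2 / ((64/65) * X)^3"
  proof (intro divide_left_mono)
    have "(64/65) * X \<le> \<xi>^2" using xi2 unfolding X_def by simp
    then show "((64/65) * X)^3 \<le> (\<xi>^2)^3" using X0 by (intro power_mono) auto
    show "0 \<le> D^2" by simp
    have "\<xi>^2 > 0" using xi2 by linarith
    then have p1: "0 < (\<xi>^2)^3" by (rule zero_less_power)
    have p2: "0 < ((64/65) * X)^3" using X0 by simp
    show "0 < (\<xi>^2)^3 * ((64/65) * X)^3" using mult_pos_pos[OF p1 p2] .
  qed
  also have "\<dots> = D^2 * (65/64)^3 / X^3" by (simp add: power_mult_distrib field_simps)
  finally have d: "(D / \<bar>\<xi>\<bar>^3)^2 \<le> D^2 * (65/64)^3 / X^3" .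
  have "X powr s * (D / \<bar>\<xi>\<bar>^3)^2 \<le> X powr s * (D^2 * (65/64)^3 / X^3)"
    using d by (intro mult_left_mono) auto
  also have "\<dots> = D^2 * (65/64)^3 * X powr (s - 3)"
    using X0 by (simp add: powr_diff powr_realpow)
  also have "X powr (s - 3) = (X / Y) powr (s - 3) * Y powr (s - 3)"
    using X0 Y0 by (simp add: powr_divide)
  also have "\<dots> \<le> 3 powr \<bar>s - 3\<bar> * Y powr (s - 3)"
    using r1 r2 by (intro mult_right_mono ratio_powr) auto
  finally show ?thesis unfolding X_def Y_def \<eta>_def by (simp add: mult_left_mono mult.assoc)
qed

lemma cs_step:
  fixes a b :: "real \<Rightarrow> complex" and \<xi> s0 :: real
  assumes [measurable]: "a \<in> borel_measurable borel" "b \<in> borel_measurable borel"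
  shows "(\<integral>\<^sup>+y. ennreal ((if 8 < \<bar>\<xi>\<bar> \<and> \<bar>y\<bar> < 5 * \<bar>\<xi>\<bar> / 16 then 1 else 0) * cmod (a y) * cmod (b (\<xi> - y))) \<partial>lborel)^2
    \<le> Hs_norm_sq s0 a * (\<integral>\<^sup>+y. ennreal ((if 8 < \<bar>\<xi>\<bar> \<and> \<bar>y\<bar> < 5 * \<bar>\<xi>\<bar> / 16 then 1 else 0) * cmod (b (\<xi> - y))^2 / (1 + y^2) powr s0) \<partial>lborel)"
proof -
  define W where "W = (\<lambda>y::real. (1 + y^2) powr s0)"
  define I where "I = (\<lambda>y::real. (if 8 < \<bar>\<xi>\<bar> \<and> \<bar>y\<bar> < 5 * \<bar>\<xi>\<bar> / 16 then 1 else 0::real))"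
  have W0: "\<And>y. W y > 0" unfolding W_def using zero_le_power2 by (smt (verit) powr_gt_zero)
  have [measurable]: "W \<in> borel_measurable borel" unfolding W_def by measurable
  have [measurable]: "I \<in> borel_measurable borel" unfolding I_def by measurable
  define f where "f = (\<lambda>y. ennreal (sqrt (W y) * cmod (a y)))"
  define g where "g = (\<lambda>y. ennreal (I y * cmod (b (\<xi> - y)) / sqrt (W y)))"
  have fm: "f \<in> borel_measurable lborel" unfolding f_def by measurable
  have gm: "g \<in> borel_measurable lborel" unfolding g_def by measurable
  have fg: "f y * g y = ennreal (I y * cmod (a y) * cmod (b (\<xi> - y)))" for y
  proof -
    have "f y * g y = ennreal (sqrt (W y) * cmod (a y) * (I y * cmod (b (\<xi> - y)) / sqrt (W y)))"
      unfolding f_def g_def using W0[of y] by (intro ennreal_mult[symmetric]) (auto simp: I_def)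
    also have "sqrt (W y) * cmod (a y) * (I y * cmod (b (\<xi> - y)) / sqrt (W y)) = I y * cmod (a y) * cmod (b (\<xi> - y))"
      using W0[of y] by (simp add: field_simps)
    finally show ?thesis .
  qed
  have f2: "f y ^ 2 = ennreal ((1 + y^2) powr s0 * (cmod (a y))^2)" for y
    unfolding f_def using W0[of y] by (simp add: ennreal_power power_mult_distrib W_def)
  have g2: "g y ^ 2 = ennreal (I y * cmod (b (\<xi> - y))^2 / (1 + y^2) powr s0)" for y
    unfolding g_def using W0[of y] by (simp add: ennreal_power power_mult_distrib power_divide W_def I_def)
  have "(\<integral>\<^sup>+y. f y * g y \<partial>lborel)^2 \<le> (\<integral>\<^sup>+y. f y ^ 2 \<partial>lborel) * (\<integral>\<^sup>+y. g y ^ 2 \<partial>lborel)"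
    by (rule Cauchy_Schwarz_nn_integral[OF fm gm])
  then show ?thesis unfolding fg f2 g2 Hs_norm_sq_def I_def .
qed

lemma core:
  fixes m :: "real \<Rightarrow> real \<Rightarrow> real" and a b :: "real \<Rightarrow> complex" and D s s0 :: real
  assumes s0: "s0 > 1/2" and D: "D \<ge> 0"
    and mb: "\<And>\<xi> y. \<bar>m \<xi> y\<bar> \<le> D / \<bar>\<xi>\<bar>^3 * (if 8 < \<bar>\<xi>\<bar> \<and> \<bar>y\<bar> < 5 * \<bar>\<xi>\<bar> / 16 then 1 else 0)"
    and mm: "\<And>\<xi>. m \<xi> \<in> borel_measurable borel"
    and am: "a \<in> borel_measurable lborel" and bm: "b \<in> borel_measurable lborel"
    and NA: "Hs_norm_sq s0 a < \<infinity>" and NB: "Hs_norm_sq (s-3) b < \<infinity>"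
  shows "(AE \<xi> in lborel. integrable lborel (\<lambda>\<xi>1. complex_of_real (m \<xi> \<xi>1) * a \<xi>1 * b (\<xi> - \<xi>1)))
     \<and> Hs_norm_sq s (\<lambda>\<xi>. - \<i> * (\<integral>\<xi>1. complex_of_real (m \<xi> \<xi>1) * a \<xi>1 * b (\<xi> - \<xi>1) \<partial>lborel))
        \<le> ennreal (D^2 * (65/64)^3 * 3 powr \<bar>s - 3\<bar>) * (\<integral>\<^sup>+y. ennreal ((1 + y^2) powr (-s0)) \<partial>lborel)
           * Hs_norm_sq s0 a * Hs_norm_sq (s-3) b"
proof -
  have [measurable]: "a \<in> borel_measurable borel" "b \<in> borel_measurable borel" using am bm by auto
  define I where "I = (\<lambda>\<xi> y::real. (if 8 < \<bar>\<xi>\<bar> \<and> \<bar>y\<bar> < 5 * \<bar>\<xi>\<bar> / 16 then 1 else 0::real))"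
  have I01: "I \<xi> y = 0 \<or> I \<xi> y = 1" for \<xi> y unfolding I_def by auto
  have I0: "0 \<le> I \<xi> y" for \<xi> y unfolding I_def by auto
  define G where "G = (\<lambda>\<xi>. \<integral>\<^sup>+y. ennreal ((if 8 < \<bar>\<xi>\<bar> \<and> \<bar>y\<bar> < 5 * \<bar>\<xi>\<bar> / 16 then 1 else 0) * cmod (a y) * cmod (b (\<xi> - y))) \<partial>lborel)"
  define H where "H = (\<lambda>\<xi>. \<integral>\<^sup>+y. ennreal ((if 8 < \<bar>\<xi>\<bar> \<and> \<bar>y\<bar> < 5 * \<bar>\<xi>\<bar> / 16 then 1 else 0) * cmod (b (\<xi> - y))^2 / (1 + y^2) powr s0) \<partial>lborel)"
  define NAv where "NAv = Hs_norm_sq s0 a"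
  define NBv where "NBv = Hs_norm_sq (s-3) b"
  define K1 where "K1 = D^2 * (65/64)^3 * 3 powr \<bar>s - 3\<bar>"
  define Iint where "Iint = (\<integral>\<^sup>+y. ennreal ((1 + y^2) powr (-s0)) \<partial>lborel)"
  define c where "c = (\<lambda>\<xi>::real. (1 + \<xi>^2) powr s * (D / \<bar>\<xi>\<bar>^3)^2)"
  define B where "B = (\<lambda>\<xi>. - \<i> * (\<integral>\<xi>1. complex_of_real (m \<xi> \<xi>1) * a \<xi>1 * b (\<xi> - \<xi>1) \<partial>lborel))"
  have K1: "K1 \<ge> 0" unfolding K1_def by simp
  have c0: "c \<xi> \<ge> 0" for \<xi> unfolding c_def by simp
  have Gm[measurable]: "G \<in> borel_measurable borel" unfolding G_def by measurable
  have Hm[measurable]: "H \<in> borel_measurable borel" unfolding H_def by measurable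
  have cm[measurable]: "c \<in> borel_measurable borel" unfolding c_def by measurable
  have cs: "G \<xi> ^ 2 \<le> NAv * H \<xi>" for \<xi>
    unfolding G_def H_def NAv_def by (rule cs_step) auto
  have nb: "ennreal (norm (complex_of_real (m \<xi> y) * a y * b (\<xi> - y)))
       \<le> ennreal (D / \<bar>\<xi>\<bar>^3) * ennreal ((if 8 < \<bar>\<xi>\<bar> \<and> \<bar>y\<bar> < 5 * \<bar>\<xi>\<bar> / 16 then 1 else 0) * cmod (a y) * cmod (b (\<xi> - y)))" for \<xi> y
  proof -
    have "norm (complex_of_real (m \<xi> y) * a y * b (\<xi> - y)) = \<bar>m \<xi> y\<bar> * cmod (a y) * cmod (b (\<xi> - y))"
      by (simp add: norm_mult)
    also have "\<dots> \<le> (D / \<bar>\<xi>\<bar>^3 * (if 8 < \<bar>\<xi>\<bar> \<and> \<bar>y\<bar> < 5 * \<bar>\<xi>\<bar> / 16 then 1 else 0)) * cmod (a y) * cmod (b (\<xi> - y))"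
      using mb[of \<xi> y] by (intro mult_right_mono) auto
    finally have "ennreal (norm (complex_of_real (m \<xi> y) * a y * b (\<xi> - y)))
       \<le> ennreal (D / \<bar>\<xi>\<bar>^3 * ((if 8 < \<bar>\<xi>\<bar> \<and> \<bar>y\<bar> < 5 * \<bar>\<xi>\<bar> / 16 then 1 else 0) * cmod (a y) * cmod (b (\<xi> - y))))"
      by (intro ennreal_leI) (simp add: mult_ac)
    also have "\<dots> = ennreal (D / \<bar>\<xi>\<bar>^3) * ennreal ((if 8 < \<bar>\<xi>\<bar> \<and> \<bar>y\<bar> < 5 * \<bar>\<xi>\<bar> / 16 then 1 else 0) * cmod (a y) * cmod (b (\<xi> - y)))"
      using D by (intro ennreal_mult) auto
    finally show ?thesis .
  qed
  have intb: "(\<integral>\<^sup>+y. ennreal (norm (complex_of_real (m \<xi> y) * a y * b (\<xi> - y))) \<partial>lborel) \<le> ennreal (D / \<bar>\<xi>\<bar>^3) * G \<xi>" for \<xi>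
  proof -
    have "(\<integral>\<^sup>+y. ennreal (norm (complex_of_real (m \<xi> y) * a y * b (\<xi> - y))) \<partial>lborel)
       \<le> (\<integral>\<^sup>+y. ennreal (D / \<bar>\<xi>\<bar>^3) * ennreal ((if 8 < \<bar>\<xi>\<bar> \<and> \<bar>y\<bar> < 5 * \<bar>\<xi>\<bar> / 16 then 1 else 0) * cmod (a y) * cmod (b (\<xi> - y))) \<partial>lborel)"
      by (intro nn_integral_mono nb)
    also have "\<dots> = ennreal (D / \<bar>\<xi>\<bar>^3) * G \<xi>"
      unfolding G_def by (rule nn_integral_cmult) measurable
    finally show ?thesis .
  qed
  have pB: "ennreal (cmod (B \<xi>)) \<le> ennreal (D / \<bar>\<xi>\<bar>^3) * G \<xi>" for \<xi>
  proof (cases "integrable lborel (\<lambda>y. complex_of_real (m \<xi> y) * a y * b (\<xi> - y))")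
    case True
    have "ennreal (cmod (B \<xi>)) = ennreal (norm (\<integral>y. complex_of_real (m \<xi> y) * a y * b (\<xi> - y) \<partial>lborel))"
      unfolding B_def by (simp add: norm_mult)
    also have "\<dots> \<le> (\<integral>\<^sup>+y. ennreal (norm (complex_of_real (m \<xi> y) * a y * b (\<xi> - y))) \<partial>lborel)"
      by (rule integral_norm_bound_ennreal[OF True])
    also have "\<dots> \<le> ennreal (D / \<bar>\<xi>\<bar>^3) * G \<xi>" by (rule intb)
    finally show ?thesis .
  next
    case False
    then show ?thesis unfolding B_def by (simp add: not_integrable_integral_eq)
  qed
  have step1: "Hs_norm_sq s B \<le> (\<integral>\<^sup>+\<xi>. ennreal (c \<xi>) * G \<xi> ^ 2 \<partial>lborel)"
    unfolding Hs_norm_sq_def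
  proof (rule nn_integral_mono)
    fix \<xi> :: real
    have "ennreal ((1 + \<xi>^2) powr s * (cmod (B \<xi>))^2) = ennreal ((1 + \<xi>^2) powr s) * ennreal (cmod (B \<xi>)) ^ 2"
      by (simp add: ennreal_mult ennreal_power)
    also have "\<dots> \<le> ennreal ((1 + \<xi>^2) powr s) * (ennreal (D / \<bar>\<xi>\<bar>^3) * G \<xi>) ^ 2"
      by (intro mult_left_mono power_mono_ennreal pB) auto
    also have "\<dots> = ennreal (c \<xi>) * G \<xi> ^ 2"
      unfolding c_def using D by (simp add: ennreal_mult ennreal_power power_mult_distrib mult_ac)
    finally show "ennreal ((1 + \<xi>^2) powr s * (cmod (B \<xi>))^2) \<le> ennreal (c \<xi>) * G \<xi> ^ 2" .
  qed
  define F where "F = (\<lambda>\<xi> y::real. ennreal (K1 * ((1 + (\<xi> - y)^2) powr (s - 3) * cmod (b (\<xi> - y))^2) * (1 + y^2) powr (-s0)))"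
  have Fm[measurable]: "case_prod F \<in> borel_measurable (lborel \<Otimes>\<^sub>M lborel)" unfolding F_def by measurable
  have cH: "ennreal (c \<xi>) * H \<xi> \<le> (\<integral>\<^sup>+y. F \<xi> y \<partial>lborel)" for \<xi>
  proof -
    have "ennreal (c \<xi>) * H \<xi> = (\<integral>\<^sup>+y. ennreal (c \<xi>) * ennreal ((if 8 < \<bar>\<xi>\<bar> \<and> \<bar>y\<bar> < 5 * \<bar>\<xi>\<bar> / 16 then 1 else 0) * cmod (b (\<xi> - y))^2 / (1 + y^2) powr s0) \<partial>lborel)"
      unfolding H_def by (rule nn_integral_cmult[symmetric]) measurable
    also have "\<dots> \<le> (\<integral>\<^sup>+y. F \<xi> y \<partial>lborel)"
    proof (rule nn_integral_mono)
      fix y :: real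
      show "ennreal (c \<xi>) * ennreal ((if 8 < \<bar>\<xi>\<bar> \<and> \<bar>y\<bar> < 5 * \<bar>\<xi>\<bar> / 16 then 1 else 0) * cmod (b (\<xi> - y))^2 / (1 + y^2) powr s0) \<le> F \<xi> y"
      proof (cases "8 < \<bar>\<xi>\<bar> \<and> \<bar>y\<bar> < 5 * \<bar>\<xi>\<bar> / 16")
        case True
        have wb: "c \<xi> \<le> K1 * (1 + (\<xi> - y)^2) powr (s - 3)"
          unfolding c_def K1_def using True by (intro weight_bound) auto
        have "ennreal (c \<xi>) * ennreal ((if 8 < \<bar>\<xi>\<bar> \<and> \<bar>y\<bar> < 5 * \<bar>\<xi>\<bar> / 16 then 1 else 0) * cmod (b (\<xi> - y))^2 / (1 + y^2) powr s0)
           = ennreal (c \<xi> * (cmod (b (\<xi> - y))^2 * (1 + y^2) powr (-s0)))"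
        proof -
          have e1: "(if 8 < \<bar>\<xi>\<bar> \<and> \<bar>y\<bar> < 5 * \<bar>\<xi>\<bar> / 16 then 1 else 0) * cmod (b (\<xi> - y))^2 / (1 + y^2) powr s0
             = cmod (b (\<xi> - y))^2 * (1 + y^2) powr (-s0)"
            unfolding if_P[OF True] by (simp add: powr_minus divide_inverse)
          show ?thesis unfolding e1 by (rule ennreal_mult'[symmetric]) (rule c0)
        qed
        also have "\<dots> \<le> F \<xi> y"
        proof -
          have "c \<xi> * (cmod (b (\<xi> - y))^2 * (1 + y^2) powr (-s0)) \<le> (K1 * (1 + (\<xi> - y)^2) powr (s - 3)) * (cmod (b (\<xi> - y))^2 * (1 + y^2) powr (-s0))"
            by (rule mult_right_mono[OF wb]) simp
          also have "\<dots> = K1 * ((1 + (\<xi> - y)^2) powr (s - 3) * cmod (b (\<xi> - y))^2) * (1 + y^2) powr (-s0)"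
            by (simp only: mult_ac)
          finally show ?thesis unfolding F_def by (rule ennreal_leI)
        qed
        finally show ?thesis .
      next
        case False
        show ?thesis unfolding if_not_P[OF False] by simp
      qed
    qed
    finally show ?thesis .
  qed
  have trans: "(\<integral>\<^sup>+\<xi>. ennreal ((1 + (\<xi> - y)^2) powr (s - 3) * cmod (b (\<xi> - y))^2) \<partial>lborel) = NBv" for y
  proof -
    have "NBv = (\<integral>\<^sup>+\<eta>. ennreal ((1 + \<eta>^2) powr (s - 3) * cmod (b \<eta>)^2) \<partial>lborel)"
      unfolding NBv_def Hs_norm_sq_def ..
    also have "\<dots> = ennreal \<bar>1::real\<bar> * (\<integral>\<^sup>+x. ennreal ((1 + (-y + 1 * x)^2) powr (s - 3) * cmod (b (-y + 1 * x))^2) \<partial>lborel)"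
      by (rule nn_integral_real_affine[of "\<lambda>\<eta>. ennreal ((1 + \<eta>^2) powr (s - 3) * cmod (b \<eta>)^2)" 1 "-y"]) measurable
    also have "\<dots> = (\<integral>\<^sup>+\<xi>. ennreal ((1 + (\<xi> - y)^2) powr (s - 3) * cmod (b (\<xi> - y))^2) \<partial>lborel)"
      by simp
    finally show ?thesis ..
  qed
  have innerF: "(\<integral>\<^sup>+\<xi>. F \<xi> y \<partial>lborel) = ennreal (K1 * (1 + y^2) powr (-s0)) * NBv" for y
  proof -
    have "(\<integral>\<^sup>+\<xi>. F \<xi> y \<partial>lborel) = (\<integral>\<^sup>+\<xi>. ennreal (K1 * (1 + y^2) powr (-s0)) * ennreal ((1 + (\<xi> - y)^2) powr (s - 3) * cmod (b (\<xi> - y))^2) \<partial>lborel)"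
      unfolding F_def using K1 by (intro nn_integral_cong) (simp add: ennreal_mult[symmetric] mult_ac)
    also have "\<dots> = ennreal (K1 * (1 + y^2) powr (-s0)) * (\<integral>\<^sup>+\<xi>. ennreal ((1 + (\<xi> - y)^2) powr (s - 3) * cmod (b (\<xi> - y))^2) \<partial>lborel)"
      by (rule nn_integral_cmult) measurable
    finally show ?thesis unfolding trans .
  qed
  have step2: "(\<integral>\<^sup>+\<xi>. ennreal (c \<xi>) * G \<xi> ^ 2 \<partial>lborel) \<le> ennreal K1 * Iint * NAv * NBv"
  proof -
    have "(\<integral>\<^sup>+\<xi>. ennreal (c \<xi>) * G \<xi> ^ 2 \<partial>lborel) \<le> (\<integral>\<^sup>+\<xi>. NAv * (ennreal (c \<xi>) * H \<xi>) \<partial>lborel)"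
    proof (rule nn_integral_mono)
      fix \<xi> :: real
      have "ennreal (c \<xi>) * G \<xi> ^ 2 \<le> ennreal (c \<xi>) * (NAv * H \<xi>)"
        by (intro mult_left_mono cs) auto
      then show "ennreal (c \<xi>) * G \<xi> ^ 2 \<le> NAv * (ennreal (c \<xi>) * H \<xi>)" by (simp add: mult_ac)
    qed
    also have "\<dots> = NAv * (\<integral>\<^sup>+\<xi>. ennreal (c \<xi>) * H \<xi> \<partial>lborel)"
      by (rule nn_integral_cmult) measurable
    also have "\<dots> \<le> NAv * (\<integral>\<^sup>+\<xi>. (\<integral>\<^sup>+y. F \<xi> y \<partial>lborel) \<partial>lborel)"
      by (intro mult_left_mono nn_integral_mono cH) auto
    also have "(\<integral>\<^sup>+\<xi>. (\<integral>\<^sup>+y. F \<xi> y \<partial>lborel) \<partial>lborel) = (\<integral>\<^sup>+y. (\<integral>\<^sup>+\<xi>. F \<xi> y \<partial>lborel) \<partial>lborel)"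
      by (rule lborel_pair.Fubini'[symmetric]) (rule Fm)
    also have "\<dots> = (\<integral>\<^sup>+y. ennreal (K1 * (1 + y^2) powr (-s0)) * NBv \<partial>lborel)"
      by (simp add: innerF)
    also have "\<dots> = (\<integral>\<^sup>+y. ennreal (K1 * (1 + y^2) powr (-s0)) \<partial>lborel) * NBv"
      by (rule nn_integral_multc) measurable
    also have "(\<integral>\<^sup>+y. ennreal (K1 * (1 + y^2) powr (-s0)) \<partial>lborel) = ennreal K1 * Iint"
      unfolding Iint_def using K1 by (simp add: ennreal_mult nn_integral_cmult)
    finally show ?thesis by (simp add: mult_ac)
  qed
  have Ifin: "Iint < \<infinity>" unfolding Iint_def by (rule powr_int_fin[OF s0])
  have Tfin: "(\<integral>\<^sup>+\<xi>. ennreal (c \<xi>) * G \<xi> ^ 2 \<partial>lborel) \<noteq> \<infinity>"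
  proof -
    have "ennreal K1 * Iint * NAv * NBv < \<infinity>"
      using Ifin NA NB unfolding NAv_def NBv_def by (simp add: ennreal_mult_less_top)
    then show ?thesis using step2 by (auto simp: top_unique)
  qed
  have AEG: "AE \<xi> in lborel. ennreal (c \<xi>) * G \<xi> ^ 2 \<noteq> \<infinity>"
    by (rule nn_integral_PInf_AE[OF _ Tfin]) measurable
  have AEI: "AE \<xi> in lborel. integrable lborel (\<lambda>\<xi>1. complex_of_real (m \<xi> \<xi>1) * a \<xi>1 * b (\<xi> - \<xi>1))"
    using AEG
  proof (rule eventually_mono)
    fix \<xi> :: real
    assume fin: "ennreal (c \<xi>) * G \<xi> ^ 2 \<noteq> \<infinity>"
    have [measurable]: "m \<xi> \<in> borel_measurable borel" by (rule mm)
    have bnd: "ennreal (D / \<bar>\<xi>\<bar>^3) * G \<xi> < \<infinity>"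
    proof (cases "8 < \<bar>\<xi>\<bar>")
      case False
      have "G \<xi> = 0" unfolding G_def using False by simp
      then show ?thesis by simp
    next
      case True
      show ?thesis
      proof (cases "D = 0")
        case True
        then show ?thesis by simp
      next
        case False
        then have Dp: "D > 0" using D by simp
        have "1 + \<xi>^2 > 0" by (simp add: add_pos_nonneg)
        then have "c \<xi> > 0" unfolding c_def using Dp True by (intro mult_pos_pos) auto
        then have "G \<xi> ^ 2 \<noteq> \<infinity>" using fin by (auto simp: ennreal_mult_eq_top_iff)
        then have "G \<xi> \<noteq> \<infinity>" by (simp add: power_eq_top_ennreal)
        then show ?thesis by (simp add: ennreal_mult_less_top top.not_eq_extremum)
      qed
    qed
    show "integrable lborel (\<lambda>\<xi>1. complex_of_real (m \<xi> \<xi>1) * a \<xi>1 * b (\<xi> - \<xi>1))"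
    proof (rule integrableI_bounded)
      show "(\<lambda>\<xi>1. complex_of_real (m \<xi> \<xi>1) * a \<xi>1 * b (\<xi> - \<xi>1)) \<in> borel_measurable lborel" by measurable
      show "(\<integral>\<^sup>+y. ennreal (norm (complex_of_real (m \<xi> y) * a y * b (\<xi> - y))) \<partial>lborel) < \<infinity>"
        using intb[of \<xi>] bnd by (rule le_less_trans)
    qed
  qed
  have "Hs_norm_sq s B \<le> ennreal K1 * Iint * NAv * NBv" using step1 step2 by (rule order_trans)
  with AEI show ?thesis unfolding B_def K1_def Iint_def NAv_def NBv_def by simp
qed

lemma psi_zero:
  assumes one: "\<forall>x. \<bar>x\<bar> \<le> 1 \<longrightarrow> \<phi> x = 1" and zer: "\<forall>x. \<bar>x\<bar> > 5/4 \<longrightarrow> \<phi> x = 0"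
    and N: "N > 0" and h: "\<bar>\<xi>\<bar> \<le> N/2 \<or> \<bar>\<xi>\<bar> > 5*N/4"
  shows "psiN \<phi> N \<xi> = 0"
  using h
proof
  assume a: "\<bar>\<xi>\<bar> \<le> N/2"
  have "\<bar>\<xi> / N\<bar> \<le> 1" using a N by (simp add: abs_divide field_simps)
  moreover have "\<bar>\<xi> / (N/2)\<bar> \<le> 1" using a N by (simp add: abs_divide field_simps)
  ultimately show ?thesis using one unfolding psiN_def phiN_def by simp
next
  assume a: "\<bar>\<xi>\<bar> > 5*N/4"
  have "\<bar>\<xi> / N\<bar> > 5/4" using a N by (simp add: abs_divide field_simps)
  moreover have "\<bar>\<xi> / (N/2)\<bar> > 5/4" using a N by (simp add: abs_divide field_simps)
  ultimately show ?thesis using zer unfolding psiN_def phiN_def by simp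
qed

lemma phi_zero:
  assumes zer: "\<forall>x. \<bar>x\<bar> > 5/4 \<longrightarrow> \<phi> x = 0"
    and N: "N > 0" and h: "\<bar>y\<bar> > 5*N/32"
  shows "phiN \<phi> (N/8) y = 0"
proof -
  have "\<bar>y / (N/8)\<bar> > 5/4" using h N by (simp add: abs_divide field_simps)
  then show ?thesis using zer unfolding phiN_def by simp
qed

lemma den_bound:
  fixes \<xi> y lam :: real
  assumes x8: "8 < \<bar>\<xi>\<bar>" and y: "\<bar>y\<bar> < 5 * \<bar>\<xi>\<bar> / 16" and l: "0 < lam" "lam \<le> 1"
  shows "\<bar>lam * \<xi>^2 - lam * y^2 - (\<xi> - y)^3\<bar> \<ge> \<bar>\<xi>\<bar>^3 / 6"
proof -
  define x where "x = \<bar>\<xi>\<bar>"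
  have x0: "x > 8" using x8 unfolding x_def .
  have e1: "\<bar>\<xi> - y\<bar> \<ge> 11 * x / 16" unfolding x_def using y abs_triangle_ineq2[of \<xi> y] by linarith
  have c1: "\<bar>(\<xi> - y)^3\<bar> \<ge> (11 * x / 16)^3"
  proof -
    have "(11 * x / 16)^3 \<le> \<bar>\<xi> - y\<bar>^3" using e1 x0 by (intro power_mono) auto
    then show ?thesis by (simp add: power_abs)
  qed
  have y2: "y^2 \<le> \<xi>^2"
  proof -
    have "\<bar>y\<bar> \<le> \<bar>\<xi>\<bar>" using y by linarith
    then have "\<bar>y\<bar>^2 \<le> \<bar>\<xi>\<bar>^2" by (intro power_mono) auto
    then show ?thesis by simp
  qed
  have c2: "\<bar>lam * \<xi>^2 - lam * y^2\<bar> \<le> x^2"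
  proof -
    have "lam * \<xi>^2 - lam * y^2 = lam * (\<xi>^2 - y^2)" by (simp add: algebra_simps)
    moreover have "0 \<le> \<xi>^2 - y^2" using y2 by simp
    moreover have "lam * (\<xi>^2 - y^2) \<le> 1 * (\<xi>^2 - y^2)" using l y2 by (intro mult_right_mono) auto
    ultimately have "\<bar>lam * \<xi>^2 - lam * y^2\<bar> \<le> \<xi>^2 - y^2" using l by simp
    moreover have "0 \<le> y^2" by simp
    moreover have "x^2 = \<xi>^2" unfolding x_def by simp
    ultimately show ?thesis by linarith
  qed
  have c3: "x^2 \<le> x^3 / 8"
  proof -
    have "x^2 * 8 \<le> x^2 * x" using x0 by (intro mult_left_mono) auto
    then show ?thesis by (simp add: power3_eq_cube power2_eq_square)
  qed
  have c4: "(11 * x / 16)^3 = (1331/4096) * x^3" by (simp add: power_mult_distrib power_divide)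
  have "\<bar>(\<xi> - y)^3\<bar> - \<bar>lam * \<xi>^2 - lam * y^2\<bar> \<le> \<bar>lam * \<xi>^2 - lam * y^2 - (\<xi> - y)^3\<bar>"
    by (metis abs_minus_commute abs_triangle_ineq2)
  moreover have "x^3 / 6 \<le> \<bar>(\<xi> - y)^3\<bar> - \<bar>lam * \<xi>^2 - lam * y^2\<bar>"
  proof -
    have "x^3 > 0" using x0 by simp
    then show ?thesis using c1 c2 c3 c4 by linarith
  qed
  ultimately show ?thesis unfolding x_def by linarith
qed

lemma geom_sum:
  fixes t :: real assumes "t \<ge> 0"
  shows "(\<Sum>k<n. if (2::real)^k < t then (2::real)^k else 0) \<le> 2 * t"
proof (induction n)
  case 0 then show ?case using assms by simp
next
  case (Suc n)
  show ?case
  proof (cases "(2::real)^n < t")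
    case True
    have "(\<Sum>k<n. if (2::real)^k < t then (2::real)^k else 0) \<le> (\<Sum>k<n. (2::real)^k)"
      by (intro sum_mono) auto
    also have "\<dots> = 2^n - 1" by (induction n) auto
    finally have "(\<Sum>k<Suc n. if (2::real)^k < t then (2::real)^k else 0) \<le> 2^n - 1 + 2^n"
      using True by simp
    then show ?thesis using True by simp
  next
    case False
    then show ?thesis using Suc.IH by simp
  qed
qed

lemma term_bound:
  fixes \<phi> :: "real \<Rightarrow> real"
  assumes one: "\<forall>x. \<bar>x\<bar> \<le> 1 \<longrightarrow> \<phi> x = 1" and zer: "\<forall>x. \<bar>x\<bar> > 5/4 \<longrightarrow> \<phi> x = 0"
    and bnd: "\<forall>x. \<bar>\<phi> x\<bar> \<le> \<Phi>" and N0: "N0 \<ge> 16" and N0k: "N \<ge> N0"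
    and l: "0 < lam" "lam \<le> 1"
  shows "\<bar>phiN \<phi> (N/8) y * psiN \<phi> N \<xi> / (lam * \<xi>^2 - lam * y^2 - (\<xi> - y)^3)\<bar>
     \<le> 15 * \<Phi>^2 / \<bar>\<xi>\<bar>^4 * (if 8 < \<bar>\<xi>\<bar> \<and> \<bar>y\<bar> < 5 * \<bar>\<xi>\<bar> / 16 then 1 else 0) * (if N < 2 * \<bar>\<xi>\<bar> then N else 0)"
proof (cases "phiN \<phi> (N/8) y = 0 \<or> psiN \<phi> N \<xi> = 0")
  case True
  have "0 \<le> \<Phi>" using bnd by (meson abs_ge_zero order_trans)
  then show ?thesis using True N0 N0k by auto
next
  case False
  have Np: "N > 0" using N0 N0k by simp
  have pz: "\<not> (\<bar>\<xi>\<bar> \<le> N/2 \<or> \<bar>\<xi>\<bar> > 5*N/4)"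
    using psi_zero[OF one zer Np, of \<xi>] False by blast
  have x1: "\<bar>\<xi>\<bar> > N/2" and x2: "\<bar>\<xi>\<bar> \<le> 5*N/4" using pz by linarith+
  have y1: "\<bar>y\<bar> \<le> 5*N/32" using phi_zero[OF zer Np, of y] False by force
  have c1: "8 < \<bar>\<xi>\<bar>" using x1 N0 N0k by simp
  have c2: "\<bar>y\<bar> < 5 * \<bar>\<xi>\<bar> / 16" using x1 y1 by simp
  have c3: "N < 2 * \<bar>\<xi>\<bar>" using x1 by simp
  have xp: "\<bar>\<xi>\<bar> > 0" using c1 by simp
  have den: "\<bar>lam * \<xi>^2 - lam * y^2 - (\<xi> - y)^3\<bar> \<ge> \<bar>\<xi>\<bar>^3 / 6"
    by (rule den_bound[OF c1 c2 l])
  have num1: "\<bar>phiN \<phi> (N/8) y\<bar> \<le> \<Phi>" using bnd unfolding phiN_def by simp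
  have num2: "\<bar>psiN \<phi> N \<xi>\<bar> \<le> 2 * \<Phi>" using bnd[rule_format, of "\<xi>/N"] bnd[rule_format, of "\<xi>/(N/2)"]
    unfolding psiN_def phiN_def by linarith
  have num: "\<bar>phiN \<phi> (N/8) y * psiN \<phi> N \<xi>\<bar> \<le> 2 * \<Phi>^2"
  proof -
    have "\<bar>phiN \<phi> (N/8) y * psiN \<phi> N \<xi>\<bar> \<le> \<Phi> * (2 * \<Phi>)"
      unfolding abs_mult by (rule mult_mono[OF num1 num2]) (use num1 in auto)
    then show ?thesis by (simp add: power2_eq_square)
  qed
  have dp: "\<bar>\<xi>\<bar>^3 / 6 > 0" using xp by simp
  have "\<bar>phiN \<phi> (N/8) y * psiN \<phi> N \<xi> / (lam * \<xi>^2 - lam * y^2 - (\<xi> - y)^3)\<bar>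
       = \<bar>phiN \<phi> (N/8) y * psiN \<phi> N \<xi>\<bar> / \<bar>lam * \<xi>^2 - lam * y^2 - (\<xi> - y)^3\<bar>" by (simp add: abs_divide)
  also have "\<dots> \<le> (2 * \<Phi>^2) / (\<bar>\<xi>\<bar>^3 / 6)"
    by (rule frac_le[OF _ num dp den]) simp
  also have "\<dots> = 12 * \<Phi>^2 / \<bar>\<xi>\<bar>^3" by simp
  also have "\<dots> \<le> 15 * \<Phi>^2 / \<bar>\<xi>\<bar>^4 * N"
  proof -
    have "12 * \<Phi>^2 * \<bar>\<xi>\<bar> \<le> 15 * \<Phi>^2 * N"
    proof -
      have "12 * \<bar>\<xi>\<bar> \<le> 15 * N" using x2 by simp
      then show ?thesis by (metis mult.assoc mult.commute mult_right_mono zero_le_power2)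
    qed
    have e: "12 * \<Phi>^2 / \<bar>\<xi>\<bar>^3 = (12 * \<Phi>^2 * \<bar>\<xi>\<bar>) / \<bar>\<xi>\<bar>^4"
    proof -
      have "\<forall>z::real. z > 0 \<longrightarrow> 12 * \<Phi>^2 / z^3 = (12 * \<Phi>^2 * z) / z^4"
        by (simp add: eval_nat_numeral field_simps)
      then show ?thesis using xp by blast
    qed
    have "(12 * \<Phi>^2 * \<bar>\<xi>\<bar>) / \<bar>\<xi>\<bar>^4 \<le> (15 * \<Phi>^2 * N) / \<bar>\<xi>\<bar>^4"
      using \<open>12 * \<Phi>^2 * \<bar>\<xi>\<bar> \<le> 15 * \<Phi>^2 * N\<close> by (rule divide_right_mono) simp
    then show ?thesis unfolding e by simp
  qed
  finally show ?thesis using c1 c2 c3 by simp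
qed

lemma M_props:
  fixes \<phi> :: "real \<Rightarrow> real"
  assumes one: "\<forall>x. \<bar>x\<bar> \<le> 1 \<longrightarrow> \<phi> x = 1" and zer: "\<forall>x. \<bar>x\<bar> > 5/4 \<longrightarrow> \<phi> x = 0"
    and bnd: "\<forall>x. \<bar>\<phi> x\<bar> \<le> \<Phi>" and N0: "N0 \<ge> 16"
    and l: "0 < lam" "lam \<le> 1" and phim: "\<phi> \<in> borel_measurable borel"
  shows "\<bar>M_lambda \<phi> N0 lam \<xi> y\<bar> \<le> 60 * \<Phi>^2 / \<bar>\<xi>\<bar>^3 * (if 8 < \<bar>\<xi>\<bar> \<and> \<bar>y\<bar> < 5 * \<bar>\<xi>\<bar> / 16 then 1 else 0)"
    and "M_lambda \<phi> N0 lam \<xi> \<in> borel_measurable borel"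
proof -
  define T where "T = (\<lambda>(k::nat) y. phiN \<phi> (N0 * 2^k / 8) y * psiN \<phi> (N0 * 2^k) \<xi> / (lam * \<xi>^2 - lam * y^2 - (\<xi> - y)^3))"
  have Mdef: "M_lambda \<phi> N0 lam \<xi> y = (1 / sqrt (2 * pi)) * (\<Sum>k. T k y)" for y
    unfolding M_lambda_def T_def Let_def ..
  obtain n where n: "2 * \<bar>\<xi>\<bar> / N0 < 2 ^ n" using real_arch_pow[of 2 "2 * \<bar>\<xi>\<bar> / N0"] by auto
  have N0p: "N0 > 0" using N0 by simp
  have Tz: "T k y = 0" if "k \<notin> {..<n}" for k y
  proof -
    have "(2::real) ^ n \<le> 2 ^ k" using that by (intro power_increasing) auto
    then have "2 * \<bar>\<xi>\<bar> / N0 < 2 ^ k" using n by linarith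
    then have "\<bar>\<xi>\<bar> \<le> N0 * 2^k / 2" using N0p by (simp add: field_simps)
    then have "psiN \<phi> (N0 * 2^k) \<xi> = 0" using N0p by (intro psi_zero[OF one zer]) auto
    then show ?thesis unfolding T_def by simp
  qed
  have sumeq: "(\<Sum>k. T k y) = (\<Sum>k<n. T k y)" for y
    by (rule suminf_finite) (auto intro: Tz)
  have Mfin: "M_lambda \<phi> N0 lam \<xi> = (\<lambda>y. (1 / sqrt (2 * pi)) * (\<Sum>k<n. T k y))"
    by (rule ext) (simp add: Mdef sumeq)
  have [measurable]: "\<phi> \<in> borel_measurable borel" by (rule phim)
  show "M_lambda \<phi> N0 lam \<xi> \<in> borel_measurable borel"
    unfolding Mfin T_def phiN_def psiN_def by measurable
  define I where "I = (if 8 < \<bar>\<xi>\<bar> \<and> \<bar>y\<bar> < 5 * \<bar>\<xi>\<bar> / 16 then 1 else 0::real)"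
  have I0: "I \<ge> 0" unfolding I_def by simp
  have tb: "\<bar>T k y\<bar> \<le> 15 * \<Phi>^2 / \<bar>\<xi>\<bar>^4 * I * N0 * (if (2::real)^k < 2 * \<bar>\<xi>\<bar> / N0 then 2^k else 0)" for k
  proof -
    have "\<bar>T k y\<bar> \<le> 15 * \<Phi>^2 / \<bar>\<xi>\<bar>^4 * I * (if N0 * 2^k < 2 * \<bar>\<xi>\<bar> then N0 * 2^k else 0)"
      unfolding T_def I_def by (rule term_bound[OF one zer bnd N0 _ l]) (use N0p in simp)
    also have "(if N0 * 2^k < 2 * \<bar>\<xi>\<bar> then N0 * 2^k else 0) = N0 * (if (2::real)^k < 2 * \<bar>\<xi>\<bar> / N0 then 2^k else 0)"
      using N0p by (simp add: field_simps)
    finally show ?thesis by (simp add: mult_ac)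
  qed
  have P0: "0 \<le> \<Phi>" using bnd by (meson abs_ge_zero order_trans)
  have c1: "1 / sqrt (2 * pi) \<le> 1"
  proof -
    have "1 \<le> sqrt (2 * pi)" using pi_gt3 by simp
    then show ?thesis by simp
  qed
  have "\<bar>M_lambda \<phi> N0 lam \<xi> y\<bar> = (1 / sqrt (2 * pi)) * \<bar>\<Sum>k<n. T k y\<bar>"
    unfolding Mfin by (simp add: abs_mult)
  also have "\<dots> \<le> 1 * \<bar>\<Sum>k<n. T k y\<bar>" by (rule mult_right_mono[OF c1]) simp
  also have "\<dots> \<le> (\<Sum>k<n. \<bar>T k y\<bar>)" by (simp add: sum_abs)
  also have "\<dots> \<le> (\<Sum>k<n. 15 * \<Phi>^2 / \<bar>\<xi>\<bar>^4 * I * N0 * (if (2::real)^k < 2 * \<bar>\<xi>\<bar> / N0 then 2^k else 0))"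
    by (rule sum_mono) (rule tb)
  also have "\<dots> = 15 * \<Phi>^2 / \<bar>\<xi>\<bar>^4 * I * N0 * (\<Sum>k<n. (if (2::real)^k < 2 * \<bar>\<xi>\<bar> / N0 then 2^k else 0))"
    by (simp add: sum_distrib_left)
  also have "\<dots> \<le> 15 * \<Phi>^2 / \<bar>\<xi>\<bar>^4 * I * N0 * (2 * (2 * \<bar>\<xi>\<bar> / N0))"
    by (rule mult_left_mono[OF geom_sum]) (use N0p I0 P0 in auto)
  also have "\<dots> = 60 * \<Phi>^2 / \<bar>\<xi>\<bar>^3 * I"
  proof (cases "\<xi> = 0")
    case True then show ?thesis by simp
  next
    case False
    have al: "\<forall>z::real. z > 0 \<longrightarrow> 15 * \<Phi>^2 / z^4 * I * N0 * (2 * (2 * z / N0)) = 60 * \<Phi>^2 / z^3 * I"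
      using N0p by (simp add: eval_nat_numeral field_simps)
    have "\<bar>\<xi>\<bar> > 0" using False by simp
    then show ?thesis using al by blast
  qed
  finally show "\<bar>M_lambda \<phi> N0 lam \<xi> y\<bar> \<le> 60 * \<Phi>^2 / \<bar>\<xi>\<bar>^3 * (if 8 < \<bar>\<xi>\<bar> \<and> \<bar>y\<bar> < 5 * \<bar>\<xi>\<bar> / 16 then 1 else 0)"
    unfolding I_def .
qed

theorem lemma5p13:
  fixes \<phi> :: "real \<Rightarrow> real" and s s0 :: real
  assumes "smooth_fun \<phi>"
    and "\<forall>x. \<phi> (- x) = \<phi> x"
    and "\<forall>x. \<bar>x\<bar> \<le> 1 \<longrightarrow> \<phi> x = 1"
    and "\<forall>x. \<bar>x\<bar> > 5/4 \<longrightarrow> \<phi> x = 0"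
    and "s0 > 1/2"
  shows "\<exists>K. \<forall>j::nat. (2::real) ^ j \<ge> K \<longrightarrow>
           (\<exists>C>0. \<forall>lam a b. 0 < lam \<and> lam \<le> 1
              \<and> a \<in> borel_measurable lborel \<and> b \<in> borel_measurable lborel
              \<and> Hs_norm_sq s0 a < \<infinity> \<and> Hs_norm_sq (s - 3) b < \<infinity> \<longrightarrow>
                (AE \<xi> in lborel. integrable lborel
                   (\<lambda>\<xi>1. complex_of_real (M_lambda \<phi> (2 ^ j) lam \<xi> \<xi>1) * a \<xi>1 * b (\<xi> - \<xi>1)))
                \<and> Hs_norm_sq s (B_hat \<phi> (2 ^ j) lam a b)
                    \<le> ennreal (C^2) * Hs_norm_sq s0 a * Hs_norm_sq (s - 3) b)"
proof -
  note sm = assms(1) and one = assms(3) and zer = assms(4) and s0 = assms(5)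
  have cont: "isCont \<phi> x" for x
  proof -
    have "((deriv ^^ 0) \<phi>) differentiable (at x)" using sm unfolding smooth_fun_def by blast
    then have "\<phi> differentiable (at x)" by simp
    then show ?thesis by (rule differentiable_imp_continuous_within)
  qed
  have phim: "\<phi> \<in> borel_measurable borel"
    by (rule borel_measurable_continuous_onI) (simp add: continuous_at_imp_continuous_on cont)
  have "compact (\<phi> ` {-5/4..5/4})"
    by (rule compact_continuous_image) (auto intro: continuous_at_imp_continuous_on cont)
  then have "bounded (\<phi> ` {-5/4..5/4})" by (rule compact_imp_bounded)
  then obtain B0 where B0: "\<forall>x\<in>{-5/4..5/4}. norm (\<phi> x) \<le> B0" unfolding bounded_iff by auto
  define \<Phi> where "\<Phi> = max B0 0"
  have bnd: "\<forall>x. \<bar>\<phi> x\<bar> \<le> \<Phi>"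
  proof
    fix x
    show "\<bar>\<phi> x\<bar> \<le> \<Phi>"
    proof (cases "\<bar>x\<bar> > 5/4")
      case True then show ?thesis using zer unfolding \<Phi>_def by simp
    next
      case False
      then have "-5/4 \<le> x" "x \<le> 5/4" by arith+
      then have "x \<in> {-5/4..5/4}" by simp
      then show ?thesis using B0 unfolding \<Phi>_def by force
    qed
  qed
  define D where "D = 60 * \<Phi>^2"
  define K1 where "K1 = D^2 * (65/64)^3 * 3 powr \<bar>s - 3\<bar>"
  define Iint where "Iint = (\<integral>\<^sup>+y. ennreal ((1 + y^2) powr (-s0)) \<partial>lborel)"
  define C where "C = sqrt (K1 * enn2real Iint) + 1"
  have K1: "K1 \<ge> 0" unfolding K1_def by simp
  have Ifin: "Iint < \<infinity>" unfolding Iint_def by (rule powr_int_fin[OF s0])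
  have Cp: "C > 0"
  proof -
    have "0 \<le> sqrt (K1 * enn2real Iint)" using K1 by simp
    then show ?thesis unfolding C_def by linarith
  qed
  have KC: "ennreal K1 * Iint \<le> ennreal (C^2)"
  proof -
    have "Iint = ennreal (enn2real Iint)" using Ifin by simp
    then have "ennreal K1 * Iint = ennreal (K1 * enn2real Iint)" using K1 by (simp add: ennreal_mult)
    also have "K1 * enn2real Iint \<le> C^2"
    proof -
      have nn: "0 \<le> K1 * enn2real Iint" using K1 by simp
      have "K1 * enn2real Iint = (sqrt (K1 * enn2real Iint))^2" using nn by simp
      also have "\<dots> \<le> C^2" unfolding C_def using nn by (intro power_mono) auto
      finally show ?thesis .
    qed
    then have "ennreal (K1 * enn2real Iint) \<le> ennreal (C^2)" by (rule ennreal_leI)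
    finally show ?thesis .
  qed
  show ?thesis
  proof (rule exI[of _ 16], intro allI impI, rule exI[of _ C], rule conjI[OF Cp], intro allI impI)
    fix j :: nat and lam :: real and a b :: "real \<Rightarrow> complex"
    assume j: "(16::real) \<le> 2 ^ j"
    assume h: "0 < lam \<and> lam \<le> 1
              \<and> a \<in> borel_measurable lborel \<and> b \<in> borel_measurable lborel
              \<and> Hs_norm_sq s0 a < \<infinity> \<and> Hs_norm_sq (s - 3) b < \<infinity>"
      have mb: "\<bar>M_lambda \<phi> (2^j) lam \<xi> y\<bar> \<le> D / \<bar>\<xi>\<bar>^3 * (if 8 < \<bar>\<xi>\<bar> \<and> \<bar>y\<bar> < 5 * \<bar>\<xi>\<bar> / 16 then 1 else 0)" for \<xi> y
        unfolding D_def using M_props(1)[OF one zer bnd j _ _ phim] h by auto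
      have mm: "M_lambda \<phi> (2^j) lam \<xi> \<in> borel_measurable borel" for \<xi>
        using M_props(2)[OF one zer bnd j _ _ phim] h by auto
      have Bh: "B_hat \<phi> (2^j) lam a b = (\<lambda>\<xi>. - \<i> * (\<integral>\<xi>1. complex_of_real (M_lambda \<phi> (2^j) lam \<xi> \<xi>1) * a \<xi>1 * b (\<xi> - \<xi>1) \<partial>lborel))"
        by (rule ext) (simp add: B_hat_def)
      have core': "(AE \<xi> in lborel. integrable lborel (\<lambda>\<xi>1. complex_of_real (M_lambda \<phi> (2^j) lam \<xi> \<xi>1) * a \<xi>1 * b (\<xi> - \<xi>1)))
         \<and> Hs_norm_sq s (B_hat \<phi> (2^j) lam a b) \<le> ennreal K1 * Iint * Hs_norm_sq s0 a * Hs_norm_sq (s-3) b"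
        unfolding Bh K1_def Iint_def
        by (rule core[OF s0 _ mb mm]) (use h in \<open>auto simp: D_def\<close>)
      have "ennreal K1 * Iint * Hs_norm_sq s0 a * Hs_norm_sq (s-3) b \<le> ennreal (C^2) * Hs_norm_sq s0 a * Hs_norm_sq (s-3) b"
        by (intro mult_right_mono KC) auto
      with core' show "(AE \<xi> in lborel. integrable lborel (\<lambda>\<xi>1. complex_of_real (M_lambda \<phi> (2^j) lam \<xi> \<xi>1) * a \<xi>1 * b (\<xi> - \<xi>1)))
        \<and> Hs_norm_sq s (B_hat \<phi> (2 ^ j) lam a b) \<le> ennreal (C^2) * Hs_norm_sq s0 a * Hs_norm_sq (s - 3) b"
        using order_trans by blast
  qed
qed

end
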